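(* Consider the problem $\min_{x\in\mathbb R^n} f(x)$ subject to $Ax=b$, where $f:\mathbb R^n\to\mathbb R$ is convex and continuously differentiable, $A\in\mathbb R^{m\times n}$, $b\in\mathbb R^m$, and assume the KKT set $\Omega$ is nonempty. Let $\{(x_k,\lambda_k)\}_{k\ge0}$ be generated by the accelerated augmented Lagrangian method described in the context (in either Case I or Case II). Then every cluster point of $\{(x_k,\lambda_k)\}_{k\ge0}$ belongs to $\Omega$.
   Context: The KKT set is $\Omega=\{(x^*,\lambda^* )\in\mathbb R^n\times\mathbb R^m: Ax^*=b,\ \nabla f(x^* )+A^\top\lambda^*=0\}$. Parameter sequence: $\{t_k\}_{k\ge1}$ is nondecreasing, $t_1=1$, $t_k>1$ for all $k>2$, $t_k\to+\infty$, and $t_{k+1}^2-t_k^2\le\rho t_{k+1}$ for all $k\ge 1$, with fixed $\rho\in(0,1]$. Fix $\eta\in[\rho,1]$, $\gamma>0$, $\delta>0$, $\beta\ge0$. Algorithm: initial points $x_0=x_1\in\mathbb R^n$, $\lambda_0=\lambda_1\in\mathbb R^m$. For $k=1,2,\dots$: set $\alpha_k=(t_{k+1}-\eta)/\eta$, $c_k=t_{k+1}/\eta$, $\bar x_k=x_k+\frac{t_k-1}{t_{k+1}}(x_k-x_{k-1})$, $\bar\lambda_k=\lambda_k+\frac{t_k-1}{t_{k+1}}(\lambda_k-\lambda_{k-1})$, $p_k=c_k\bar\lambda_k-\alpha_k\lambda_k$, $r_k=\alpha_kAx_k+b$. Case I ($f$ convex and $C^1$): $x_{k+1}=\arg\min_{x}\{f(x)+\frac\beta2\|Ax-b\|^2+\frac1{2\gamma}\|x-\bar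 x_k\|^2+\langle p_k,Ax-b\rangle+\frac\delta2\|c_kAx-r_k\|^2\}$. Case II ($f$ convex with $L$-Lipschitz gradient, and $\gamma\le 1/L$): $x_{k+1}=\arg\min_{x}\{\langle\nabla f(\bar x_k),x\rangle+\frac\beta2\|Ax-b\|^2+\frac1{2\gamma}\|x-\bar x_k\|^2+\langle p_k,Ax-b\rangle+\frac\delta2\|c_kAx-r_k\|^2\}$. Then $\lambda_{k+1}=\bar\lambda_k+\delta(c_kAx_{k+1}-r_k)$. *)

theory Defs
  imports "HOL-Analysis.Analysis"
begin

definition KKT_set :: "real^'n^'m \<Rightarrow> real^'m \<Rightarrow> (real^'n \<Rightarrow> real^'n) \<Rightarrow> ((real^'n) \<times> (real^'m)) set" where
  "KKT_set A b df = {(xs, ls). A *v xs = b \<and> df xs + transpose A *v ls = 0}"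

definition aalm_alpha :: "(nat \<Rightarrow> real) \<Rightarrow> real \<Rightarrow> nat \<Rightarrow> real" where
  "aalm_alpha t \<eta> k = (t (Suc k) - \<eta>) / \<eta>"

definition aalm_c :: "(nat \<Rightarrow> real) \<Rightarrow> real \<Rightarrow> nat \<Rightarrow> real" where
  "aalm_c t \<eta> k = t (Suc k) / \<eta>"

definition aalm_bar :: "(nat \<Rightarrow> real) \<Rightarrow> (nat \<Rightarrow> 'a::real_vector) \<Rightarrow> nat \<Rightarrow> 'a" where
  "aalm_bar t u k = u k + ((t k - 1) / t (Suc k)) *\<^sub>R (u k - u (k - 1))"

text \<open>Subproblem objective; h is f (Case I) or the linearization of f at xbar (Case II).\<close>
definition aalm_obj :: "(real^'n \<Rightarrow> real) \<Rightarrow> real^'n^'m \<Rightarrow> real^'m \<Rightarrow> real \<Rightarrow> real \<Rightarrow> real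
    \<Rightarrow> real^'n \<Rightarrow> real^'m \<Rightarrow> real \<Rightarrow> real^'m \<Rightarrow> real^'n \<Rightarrow> real" where
  "aalm_obj h A b \<beta> \<gamma> \<delta> xb p c r y =
     h y + \<beta> / 2 * (norm (A *v y - b))\<^sup>2 + 1 / (2 * \<gamma>) * (norm (y - xb))\<^sup>2
       + inner p (A *v y - b) + \<delta> / 2 * (norm (c *\<^sub>R (A *v y) - r))\<^sup>2"

end

theory Submission
  imports Defs
begin

lemma grad_ineq:
  fixes f :: "'a::real_inner \<Rightarrow> real"
  assumes cvx: "convex_on UNIV f" and d: "(f has_derivative (\<lambda>h. inner g h)) (at y)"
  shows "f x \<ge> f y + inner g (x - y)"
proof -
  define \<phi> where "\<phi> s = f (y + s *\<^sub>R (x - y))" for s :: real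
  have L0: "((\<lambda>s. y + s *\<^sub>R (x - y)) has_derivative (\<lambda>s. s *\<^sub>R (x - y))) (at 0)"
    by (intro derivative_eq_intros) auto
  have "((\<lambda>s. f (y + s *\<^sub>R (x - y))) has_derivative (\<lambda>s. inner g (s *\<^sub>R (x - y)))) (at 0)"
    using has_derivative_compose[OF L0, of f "\<lambda>h. inner g h"] d by simp
  moreover have "(\<lambda>s. inner g (s *\<^sub>R (x - y))) = (*) (inner g (x - y))"
    by (auto simp: fun_eq_iff)
  ultimately have D: "(\<phi> has_field_derivative inner g (x - y)) (at 0)"
    unfolding has_field_derivative_def \<phi>_def by simp
  have C: "convex_on UNIV \<phi>"
  proof (rule convex_onI)
    fix t a b :: real assume t: "0 < t" "t < 1"
    have "y + ((1 - t) * a + t * b) *\<^sub>R (x - y) = (1 - t) *\<^sub>R (y + a *\<^sub>R (x - y)) + t *\<^sub>R (y + b *\<^sub>R (x - y))"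
      by (simp add: algebra_simps)
    then show "\<phi> ((1 - t) *\<^sub>R a + t *\<^sub>R b) \<le> (1 - t) * \<phi> a + t * \<phi> b"
      unfolding \<phi>_def using convex_onD[OF cvx, of t] t by simp
  qed simp
  have "\<phi> 1 - \<phi> 0 \<ge> inner g (x - y) * (1 - 0)"
    by (rule convex_on_imp_above_tangent[OF C]) (use D in auto)
  then show ?thesis unfolding \<phi>_def by simp
qed

lemma descent:
  fixes f :: "'a::real_inner \<Rightarrow> real"
  assumes d: "\<And>z. (f has_derivative (\<lambda>h. inner (df z) h)) (at z)"
    and lip: "\<forall>u v. norm (df u - df v) \<le> L * norm (u - v)"
  shows "f x \<le> f y + inner (df y) (x - y) + L / 2 * (norm (x - y))\<^sup>2"
proof -
  define dd where "dd = x - y"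
  define h where "h s = f (y + s *\<^sub>R dd) - s * inner (df y) dd - L / 2 * s\<^sup>2 * (norm dd)\<^sup>2" for s :: real
  have "h 0 \<ge> h 1"
  proof (rule DERIV_nonpos_imp_nonincreasing[of 0 1 h])
    fix s :: real assume s: "0 \<le> s" "s \<le> 1"
    have L0: "((\<lambda>s. y + s *\<^sub>R dd) has_derivative (\<lambda>s. s *\<^sub>R dd)) (at s)"
      by (intro derivative_eq_intros) auto
    have "((\<lambda>s. f (y + s *\<^sub>R dd)) has_derivative (\<lambda>r. inner (df (y + s *\<^sub>R dd)) (r *\<^sub>R dd))) (at s)"
      using has_derivative_compose[OF L0, of f "\<lambda>h. inner (df (y + s *\<^sub>R dd)) h"] d by simp
    moreover have "(\<lambda>r. inner (df (y + s *\<^sub>R dd)) (r *\<^sub>R dd)) = (*) (inner (df (y + s *\<^sub>R dd)) dd)"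
      by (auto simp: fun_eq_iff)
    ultimately have D1: "((\<lambda>s. f (y + s *\<^sub>R dd)) has_field_derivative inner (df (y + s *\<^sub>R dd)) dd) (at s)"
      unfolding has_field_derivative_def by simp
    have D: "(h has_field_derivative (inner (df (y + s *\<^sub>R dd)) dd - inner (df y) dd - L / 2 * (2 * s) * (norm dd)\<^sup>2)) (at s)"
    proof -
      have D2: "((\<lambda>s. s * inner (df y) dd) has_field_derivative inner (df y) dd) (at s)"
        by (auto intro!: derivative_eq_intros)
      have D3: "((\<lambda>s. L / 2 * s\<^sup>2 * (norm dd)\<^sup>2) has_field_derivative L / 2 * (2 * s) * (norm dd)\<^sup>2) (at s)"
        by (auto intro!: derivative_eq_intros)
      show ?thesis unfolding h_def by (rule DERIV_diff[OF DERIV_diff[OF D1 D2] D3])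
    qed
    have "inner (df (y + s *\<^sub>R dd)) dd - inner (df y) dd = inner (df (y + s *\<^sub>R dd) - df y) dd"
      by (simp add: inner_diff_left)
    also have "\<dots> \<le> norm (df (y + s *\<^sub>R dd) - df y) * norm dd"
      by (rule order_trans[OF _ Cauchy_Schwarz_ineq2]) simp
    also have "\<dots> \<le> (L * norm (s *\<^sub>R dd)) * norm dd"
      using lip[rule_format, of "y + s *\<^sub>R dd" y] by (intro mult_right_mono) auto
    also have "\<dots> = L / 2 * (2 * s) * (norm dd)\<^sup>2"
      using s by (simp add: power2_eq_square)
    finally have "inner (df (y + s *\<^sub>R dd)) dd - inner (df y) dd - L / 2 * (2 * s) * (norm dd)\<^sup>2 \<le> 0"
      by simp
    then show "\<exists>z. DERIV h s :> z \<and> z \<le> 0"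
      using D by blast
  qed simp
  then show ?thesis unfolding h_def dd_def by simp
qed


lemma tele:
  fixes a a0 y1 y0 xi :: "'a::real_inner"
  assumes k: "0 \<le> \<kappa>" "\<kappa> \<le> 1" and e: "0 \<le> \<epsilon>" and c: "c' - 1/2 - \<epsilon>/2 \<ge> 0"
    and a0: "a0 = y1 + (c' - 1) *\<^sub>R xi" and y0: "y0 = y1 - xi"
  shows "inner (a - a0 + \<epsilon> *\<^sub>R xi) a - \<kappa> / 2 * (norm (a - a0 + \<epsilon> *\<^sub>R xi))\<^sup>2
     \<ge> 1/2 * (norm a)\<^sup>2 - 1/2 * (norm a0)\<^sup>2 + \<epsilon>/2 * (norm y1)\<^sup>2 - \<epsilon>/2 * (norm y0)\<^sup>2"
proof -
  define D where "D = a - a0 + \<epsilon> *\<^sub>R xi"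
  have id: "inner D a - \<kappa> / 2 * (norm D)\<^sup>2
     - (1/2 * (norm a)\<^sup>2 - 1/2 * (norm a0)\<^sup>2 + \<epsilon>/2 * (norm y1)\<^sup>2 - \<epsilon>/2 * (norm y0)\<^sup>2)
     = (1 - \<kappa>)/2 * (norm D)\<^sup>2 + \<epsilon> * (c' - 1/2 - \<epsilon>/2) * (norm xi)\<^sup>2"
    unfolding D_def a0 y0
    apply (simp add: power2_norm_eq_inner inner_simps inner_commute)
    apply (simp add: field_simps)
    done
  have "0 \<le> (1 - \<kappa>)/2 * (norm D)\<^sup>2 + \<epsilon> * (c' - 1/2 - \<epsilon>/2) * (norm xi)\<^sup>2"
    using k e c by (intro add_nonneg_nonneg mult_nonneg_nonneg) auto
  then show ?thesis using id unfolding D_def by linarith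
qed


lemma first_order:
  fixes h :: "real^'n \<Rightarrow> real" and A :: "real^'n^'m"
  assumes g0: "\<gamma> > 0" and hd: "(h has_derivative (\<lambda>v. inner g v)) (at y)"
    and mn: "\<forall>z. aalm_obj h A b \<beta> \<gamma> \<delta> xb p c r y \<le> aalm_obj h A b \<beta> \<gamma> \<delta> xb p c r z"
  shows "inner g v + \<beta> * inner (A *v y - b) (A *v v) + (1/\<gamma>) * inner (y - xb) v
     + inner (p + (\<delta>*c) *\<^sub>R (c *\<^sub>R (A *v y) - r)) (A *v v) = 0"
proof -
  have AD: "((\<lambda>z. A *v z) has_derivative (\<lambda>z. A *v z)) (at y)"
    by (rule bounded_linear_imp_has_derivative) simp
  have D: "((\<lambda>z. aalm_obj h A b \<beta> \<gamma> \<delta> xb p c r z) has_derivative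
     (\<lambda>v. inner g v + \<beta> * inner (A *v y - b) (A *v v) + (1/\<gamma>) * inner (y - xb) v
     + inner (p + (\<delta>*c) *\<^sub>R (c *\<^sub>R (A *v y) - r)) (A *v v))) (at y)"
    unfolding aalm_obj_def power2_norm_eq_inner
    using g0 by (auto intro!: derivative_eq_intros hd AD simp: fun_eq_iff inner_simps inner_commute algebra_simps)
  have "(\<lambda>v. inner g v + \<beta> * inner (A *v y - b) (A *v v) + (1/\<gamma>) * inner (y - xb) v
     + inner (p + (\<delta>*c) *\<^sub>R (c *\<^sub>R (A *v y) - r)) (A *v v)) = (\<lambda>v. 0)"
    by (rule differential_zero_maxmin[of y UNIV, OF _ _ D]) (use mn in auto)
  then show ?thesis by (simp add: fun_eq_iff)
qed


lemma avg_bound: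
  fixes u w :: "nat \<Rightarrow> 'a::real_normed_vector"
  assumes th: "\<And>k. 0 \<le> \<theta> k \<and> \<theta> k \<le> 1"
    and rec: "\<And>k. u (Suc k) = (1 - \<theta> k) *\<^sub>R u k + \<theta> k *\<^sub>R w k"
    and wb: "\<And>k. norm (w k) \<le> R"
  shows "norm (u k) \<le> max (norm (u 0)) R"
proof (induction k)
  case 0 then show ?case by simp
next
  case (Suc k)
  have "norm (u (Suc k)) \<le> (1 - \<theta> k) * norm (u k) + \<theta> k * norm (w k)"
    unfolding rec using th[of k]
    by (metis (no_types, opaque_lifting) abs_of_nonneg diff_ge_0_iff_ge norm_scaleR norm_triangle_ineq)
  also have "\<dots> \<le> (1 - \<theta> k) * max (norm (u 0)) R + \<theta> k * max (norm (u 0)) R"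
    using th[of k] Suc wb[of k] by (intro add_mono mult_left_mono) auto
  also have "\<dots> = max (norm (u 0)) R" by (simp add: algebra_simps)
  finally show ?case .
qed

lemma bar_id:
  fixes u :: "nat \<Rightarrow> 'a::real_vector"
  assumes "t (Suc k) \<noteq> 0" "\<eta> \<noteq> 0"
  shows "(t (Suc k) / \<eta>) *\<^sub>R (u (Suc k) - aalm_bar t u k)
    = (u k + (t (Suc k) / \<eta>) *\<^sub>R (u (Suc k) - u k)) - (u (k - 1) + (t k / \<eta>) *\<^sub>R (u k - u (k - 1)))
      + ((1 - \<eta>) / \<eta>) *\<^sub>R (u k - u (k - 1))"
proof -
  have e1: "(t (Suc k) / \<eta>) * ((t k - 1) / t (Suc k)) = (t k - 1) / \<eta>"
    using assms by (simp add: field_simps)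
  have "(t (Suc k) / \<eta>) *\<^sub>R (u (Suc k) - aalm_bar t u k)
     = (t (Suc k) / \<eta>) *\<^sub>R (u (Suc k) - u k) - ((t (Suc k) / \<eta>) * ((t k - 1) / t (Suc k))) *\<^sub>R (u k - u (k - 1))"
    unfolding aalm_bar_def by (simp add: algebra_simps)
  also have "\<dots> = (t (Suc k) / \<eta>) *\<^sub>R (u (Suc k) - u k) - ((t k - 1) / \<eta>) *\<^sub>R (u k - u (k - 1))"
    using e1 by simp
  also have "\<dots> = (t (Suc k) / \<eta>) *\<^sub>R (u (Suc k) - u k) + (1 - t k / \<eta> + (1 - \<eta>) / \<eta>) *\<^sub>R (u k - u (k - 1))"
  proof -
    have "- ((t k - 1) / \<eta>) = 1 - t k / \<eta> + (1 - \<eta>) / \<eta>" using assms by (simp add: field_simps)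
    then show ?thesis by (metis (no_types, lifting) diff_conv_add_uminus scaleR_minus_left)
  qed
  also have "\<dots> = (u k + (t (Suc k) / \<eta>) *\<^sub>R (u (Suc k) - u k)) - (u (k - 1) + (t k / \<eta>) *\<^sub>R (u k - u (k - 1)))
      + ((1 - \<eta>) / \<eta>) *\<^sub>R (u k - u (k - 1))"
    by (simp add: algebra_simps)
  finally show ?thesis .
qed

lemma kkt_final:
  fixes f :: "real^'n \<Rightarrow> real" and A :: "real^'n^'m"
  assumes fd: "(f has_derivative (\<lambda>h. inner (df xs) h)) (at xs)"
    and feas: "A *v xs = b"
    and mn: "\<forall>z. f xs \<le> f z + \<beta> / 2 * (norm (A *v z - b))\<^sup>2 + inner ls (A *v z - b)"
  shows "df xs + transpose A *v ls = 0"
proof -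
  have AD: "((\<lambda>z. A *v z) has_derivative (\<lambda>z. A *v z)) (at xs)"
    by (rule bounded_linear_imp_has_derivative) simp
  have D: "((\<lambda>z. f z + \<beta> / 2 * (norm (A *v z - b))\<^sup>2 + inner ls (A *v z - b)) has_derivative
     (\<lambda>v. inner (df xs) v + \<beta> * inner (A *v xs - b) (A *v v) + inner ls (A *v v))) (at xs)"
    unfolding power2_norm_eq_inner
    by (auto intro!: derivative_eq_intros fd AD simp: fun_eq_iff inner_simps inner_commute algebra_simps)
  have "(\<lambda>v. inner (df xs) v + \<beta> * inner (A *v xs - b) (A *v v) + inner ls (A *v v)) = (\<lambda>v. 0)"
    by (rule differential_zero_maxmin[of xs UNIV, OF _ _ D]) (use mn feas in auto)
  then have "\<And>v. inner (df xs) v + inner ls (A *v v) = 0" using feas by (simp add: fun_eq_iff)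
  then have "\<And>v. inner (df xs + transpose A *v ls) v = 0"
    by (simp add: inner_add_left dot_lmul_matrix)
  then show ?thesis using inner_eq_zero_iff by blast
qed

lemma avg_lower:
  fixes a d :: "nat \<Rightarrow> real"
  assumes d1: "\<And>j. j \<ge> J \<Longrightarrow> d (Suc j) \<ge> 1"
    and drec: "\<And>j. j \<ge> J \<Longrightarrow> (d (Suc j))\<^sup>2 - d (Suc j) \<le> (d j)\<^sup>2"
    and arec: "\<And>j. j \<ge> J \<Longrightarrow> a (Suc j) \<ge> (1 - 1 / d (Suc j)) * a j - \<epsilon> / d (Suc j)"
    and j: "j \<ge> J"
  shows "(d j)\<^sup>2 * (a j + \<epsilon>) \<ge> min 0 ((d J)\<^sup>2 * (a J + \<epsilon>))"
  using j
proof (induction j rule: dec_induct)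
  case base then show ?case by simp
next
  case (step j)
  define d' where "d' = d (Suc j)"
  have d'1: "d' \<ge> 1" using d1 step by (simp add: d'_def)
  have "a (Suc j) + \<epsilon> \<ge> (1 - 1 / d') * (a j + \<epsilon>)"
  proof -
    have "(1 - 1 / d') * (a j + \<epsilon>) = (1 - 1 / d') * a j - \<epsilon> / d' + \<epsilon>"
      using d'1 by (simp add: field_simps)
    then show ?thesis using arec[OF step(1)] unfolding d'_def[symmetric] by linarith
  qed
  then have "d'\<^sup>2 * (a (Suc j) + \<epsilon>) \<ge> d'\<^sup>2 * ((1 - 1 / d') * (a j + \<epsilon>))"
    by (intro mult_left_mono) auto
  also have "d'\<^sup>2 * ((1 - 1 / d') * (a j + \<epsilon>)) = (d'\<^sup>2 - d') * (a j + \<epsilon>)"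
    using d'1 by (simp add: field_simps power2_eq_square)
  finally have A1: "d'\<^sup>2 * (a (Suc j) + \<epsilon>) \<ge> (d'\<^sup>2 - d') * (a j + \<epsilon>)" .
  show ?case
  proof (cases "a j + \<epsilon> \<ge> 0")
    case True
    have "(d'\<^sup>2 - d') \<ge> 0" using d'1 by (simp add: power2_eq_square)
    then have "(d'\<^sup>2 - d') * (a j + \<epsilon>) \<ge> 0" using True by simp
    then show ?thesis using A1 unfolding d'_def by linarith
  next
    case False
    have "(d'\<^sup>2 - d') * (a j + \<epsilon>) \<ge> (d j)\<^sup>2 * (a j + \<epsilon>)"
      using drec[OF step(1)] False unfolding d'_def[symmetric] by (intro mult_right_mono_neg) auto
    then show ?thesis using A1 step(3) unfolding d'_def by linarith
  qed
qed


theorem lemma4p1: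
  fixes f :: "real^'n \<Rightarrow> real" and df :: "real^'n \<Rightarrow> real^'n"
    and A :: "real^'n^'m" and b :: "real^'m"
    and t :: "nat \<Rightarrow> real" and \<rho> \<eta> \<gamma> \<delta> \<beta> :: real
    and x :: "nat \<Rightarrow> real^'n" and lam :: "nat \<Rightarrow> real^'m"
  assumes f_convex: "convex_on UNIV f"
    and f_grad: "\<And>z. (f has_derivative (\<lambda>h. inner (df z) h)) (at z)"
    and df_cont: "continuous_on UNIV df"
    and KKT_nonempty: "KKT_set A b df \<noteq> {}"
    and t_mono: "\<And>k. k \<ge> 1 \<Longrightarrow> t k \<le> t (Suc k)"
    and t_1: "t 1 = 1"
    and t_gt1: "\<And>k. k > 2 \<Longrightarrow> t k > 1"
    and t_inf: "filterlim t at_top sequentially"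
    and t_growth: "\<And>k. k \<ge> 1 \<Longrightarrow> (t (Suc k))\<^sup>2 - (t k)\<^sup>2 \<le> \<rho> * t (Suc k)"
    and rho: "0 < \<rho>" "\<rho> \<le> 1"
    and eta: "\<rho> \<le> \<eta>" "\<eta> \<le> 1"
    and gamma: "\<gamma> > 0" and delta: "\<delta> > 0" and beta: "\<beta> \<ge> 0"
    and init: "x 0 = x 1" "lam 0 = lam 1"
    and x_update:
      "(\<forall>k\<ge>1. \<forall>y. aalm_obj f A b \<beta> \<gamma> \<delta> (aalm_bar t x k)
              (aalm_c t \<eta> k *\<^sub>R aalm_bar t lam k - aalm_alpha t \<eta> k *\<^sub>R lam k)
              (aalm_c t \<eta> k) (aalm_alpha t \<eta> k *\<^sub>R (A *v x k) + b) (x (Suc k))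
            \<le> aalm_obj f A b \<beta> \<gamma> \<delta> (aalm_bar t x k)
              (aalm_c t \<eta> k *\<^sub>R aalm_bar t lam k - aalm_alpha t \<eta> k *\<^sub>R lam k)
              (aalm_c t \<eta> k) (aalm_alpha t \<eta> k *\<^sub>R (A *v x k) + b) y)
       \<or> ((\<exists>L>0. (\<forall>u v. norm (df u - df v) \<le> L * norm (u - v)) \<and> \<gamma> \<le> 1 / L)
          \<and> (\<forall>k\<ge>1. \<forall>y.
              aalm_obj (\<lambda>z. inner (df (aalm_bar t x k)) z) A b \<beta> \<gamma> \<delta> (aalm_bar t x k)
                (aalm_c t \<eta> k *\<^sub>R aalm_bar t lam k - aalm_alpha t \<eta> k *\<^sub>R lam k)
                (aalm_c t \<eta> k) (aalm_alpha t \<eta> k *\<^sub>R (A *v x k) + b) (x (Suc k))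
              \<le> aalm_obj (\<lambda>z. inner (df (aalm_bar t x k)) z) A b \<beta> \<gamma> \<delta> (aalm_bar t x k)
                (aalm_c t \<eta> k *\<^sub>R aalm_bar t lam k - aalm_alpha t \<eta> k *\<^sub>R lam k)
                (aalm_c t \<eta> k) (aalm_alpha t \<eta> k *\<^sub>R (A *v x k) + b) y))"
    and lam_update: "\<And>k. k \<ge> 1 \<Longrightarrow>
      lam (Suc k) = aalm_bar t lam k
        + \<delta> *\<^sub>R (aalm_c t \<eta> k *\<^sub>R (A *v x (Suc k)) - (aalm_alpha t \<eta> k *\<^sub>R (A *v x k) + b))"
  shows "\<forall>xs ls. (\<exists>r. strict_mono r \<and> ((\<lambda>k. (x (r k), lam (r k))) \<longlonglongrightarrow> (xs, ls)))
            \<longrightarrow> (xs, ls) \<in> KKT_set A b df"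
proof (intro allI impI)
  fix xs ls
  assume "\<exists>r. strict_mono r \<and> ((\<lambda>k. (x (r k), lam (r k))) \<longlonglongrightarrow> (xs, ls))"
  then obtain r where r: "strict_mono r" and rconv: "(\<lambda>k. (x (r k), lam (r k))) \<longlonglongrightarrow> (xs, ls)"
    by blast
  obtain xh lh where xh: "A *v xh = b" and lh: "df xh + transpose A *v lh = 0"
    using KKT_nonempty unfolding KKT_set_def by auto
  have eta0: "\<eta> > 0" using rho eta by linarith
  have tge1: "t k \<ge> 1" if "k \<ge> 1" for k
    using that
  proof (induction k)
    case 0 then show ?case by simp
  next
    case (Suc k)
    show ?case
    proof (cases "k = 0")
      case True then show ?thesis using t_1 by simp
    next
      case False
      then have "1 \<le> t k" using Suc by simp
      then show ?thesis using t_mono[of k] False by simp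
    qed
  qed
  define c where "c k = t (Suc k) / \<eta>" for k
  have c_ge1: "c k \<ge> 1" for k
  proof -
    have "t (Suc k) \<ge> 1" using tge1 by simp
    then have "t (Suc k) \<ge> \<eta>" using eta by linarith
    then show ?thesis unfolding c_def using eta0 by simp
  qed
  have c_pos: "c k > 0" for k using c_ge1[of k] by linarith
  have c_rec: "(c (Suc k))\<^sup>2 - c (Suc k) \<le> (c k)\<^sup>2" for k
  proof -
    have "t (Suc (Suc k)) \<ge> 1" using tge1 by simp
    have "(t (Suc (Suc k)))\<^sup>2 - (t (Suc k))\<^sup>2 \<le> \<rho> * t (Suc (Suc k))" using t_growth[of "Suc k"] by simp
    also have "\<dots> \<le> \<eta> * t (Suc (Suc k))" using eta \<open>t (Suc (Suc k)) \<ge> 1\<close> by (intro mult_right_mono) auto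
    finally have "(t (Suc (Suc k)))\<^sup>2 - \<eta> * t (Suc (Suc k)) \<le> (t (Suc k))\<^sup>2" by simp
    then have "((t (Suc (Suc k)))\<^sup>2 - \<eta> * t (Suc (Suc k))) / \<eta>\<^sup>2 \<le> (t (Suc k))\<^sup>2 / \<eta>\<^sup>2"
      by (intro divide_right_mono) auto
    then show ?thesis unfolding c_def using eta0 by (simp add: field_simps power2_eq_square)
  qed
  have c_inf: "filterlim c at_top sequentially"
  proof -
    have "filterlim (\<lambda>k. t (Suc k)) at_top sequentially"
      using t_inf filterlim_sequentially_Suc by blast
    then have "filterlim (\<lambda>k. (1 / \<eta>) * t (Suc k)) at_top sequentially"
      using eta0 by (intro filterlim_tendsto_pos_mult_at_top[OF tendsto_const]) auto
    then show ?thesis unfolding c_def by simp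
  qed
  have aC: "aalm_c t \<eta> k = c k" for k unfolding aalm_c_def c_def ..
  have aA: "aalm_alpha t \<eta> k = c k - 1" for k unfolding aalm_alpha_def c_def using eta0 by (simp add: field_simps)
  define xb where "xb k = aalm_bar t x k" for k
  define lb where "lb k = aalm_bar t lam k" for k
  define W where "W k = x k + c k *\<^sub>R (x (Suc k) - x k)" for k
  define N where "N k = lam k + c k *\<^sub>R (lam (Suc k) - lam k)" for k
  define eps where "eps = (1 - \<eta>) / \<eta>"
  have eps0: "eps \<ge> 0" unfolding eps_def using eta eta0 by simp
  define e where "e k = A *v x k - b" for k
  define F where "F z = f z + \<beta> / 2 * (norm (A *v z - b))\<^sup>2" for z
  have Pid_x: "c k *\<^sub>R (x (Suc k) - xb k) = (W k - W (k - 1)) + eps *\<^sub>R (x k - x (k - 1))" if "k \<ge> 1" for k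
  proof -
    have "t (Suc k) \<noteq> 0" using tge1[of "Suc k"] by simp
    then show ?thesis unfolding c_def W_def xb_def eps_def using bar_id[of t k \<eta> x] eta0 that by simp
  qed
  have Pid_l: "c k *\<^sub>R (lam (Suc k) - lb k) = (N k - N (k - 1)) + eps *\<^sub>R (lam k - lam (k - 1))" if "k \<ge> 1" for k
  proof -
    have "t (Suc k) \<noteq> 0" using tge1[of "Suc k"] by simp
    then show ?thesis unfolding c_def N_def lb_def eps_def using bar_id[of t k \<eta> lam] eta0 that by simp
  qed
  have Did: "lam (Suc k) - lb k = \<delta> *\<^sub>R (A *v W k - b)" if "k \<ge> 1" for k
  proof -
    have "lam (Suc k) - lb k = \<delta> *\<^sub>R (c k *\<^sub>R (A *v x (Suc k)) - ((c k - 1) *\<^sub>R (A *v x k) + b))"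
      using lam_update[OF that] unfolding lb_def aC aA by simp
    also have "\<dots> = \<delta> *\<^sub>R (A *v W k - b)"
      unfolding W_def by (simp add: matrix_vector_right_distrib matrix_vector_mult_diff_distrib algebra_simps)
    finally show ?thesis .
  qed
  have FOC_gen: "inner g v + \<beta> * inner (e (Suc k)) (A *v v) + (1/\<gamma>) * inner (x (Suc k) - xb k) v + inner (N k) (A *v v) = 0"
    if k1: "k \<ge> 1" and hd: "(h has_derivative (\<lambda>v. inner g v)) (at (x (Suc k)))"
      and mn: "\<forall>z. aalm_obj h A b \<beta> \<gamma> \<delta> (xb k) (aalm_c t \<eta> k *\<^sub>R lb k - aalm_alpha t \<eta> k *\<^sub>R lam k)
              (aalm_c t \<eta> k) (aalm_alpha t \<eta> k *\<^sub>R (A *v x k) + b) (x (Suc k))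
            \<le> aalm_obj h A b \<beta> \<gamma> \<delta> (xb k) (aalm_c t \<eta> k *\<^sub>R lb k - aalm_alpha t \<eta> k *\<^sub>R lam k)
              (aalm_c t \<eta> k) (aalm_alpha t \<eta> k *\<^sub>R (A *v x k) + b) z"
    for k g h v
  proof -
    have fo: "inner g v + \<beta> * inner (A *v x (Suc k) - b) (A *v v) + (1/\<gamma>) * inner (x (Suc k) - xb k) v
     + inner ((aalm_c t \<eta> k *\<^sub>R lb k - aalm_alpha t \<eta> k *\<^sub>R lam k) + (\<delta> * aalm_c t \<eta> k) *\<^sub>R (aalm_c t \<eta> k *\<^sub>R (A *v x (Suc k)) - (aalm_alpha t \<eta> k *\<^sub>R (A *v x k) + b))) (A *v v) = 0"
      by (rule first_order[OF gamma hd mn])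
    have "(\<delta> * aalm_c t \<eta> k) *\<^sub>R (aalm_c t \<eta> k *\<^sub>R (A *v x (Suc k)) - (aalm_alpha t \<eta> k *\<^sub>R (A *v x k) + b))
        = c k *\<^sub>R (lam (Suc k) - lb k)"
      using lam_update[OF k1] unfolding lb_def aC by simp
    then have "(aalm_c t \<eta> k *\<^sub>R lb k - aalm_alpha t \<eta> k *\<^sub>R lam k) + (\<delta> * aalm_c t \<eta> k) *\<^sub>R (aalm_c t \<eta> k *\<^sub>R (A *v x (Suc k)) - (aalm_alpha t \<eta> k *\<^sub>R (A *v x k) + b))
        = N k"
      unfolding N_def aC aA by (simp add: algebra_simps)
    then show ?thesis using fo unfolding e_def by simp
  qed
  obtain Lp where Lp0: "Lp \<ge> 0" and Lpg: "Lp * \<gamma> \<le> 1"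
    and FOC: "\<And>k. k \<ge> 1 \<Longrightarrow> \<exists>g. (\<forall>z. f z \<ge> f (x (Suc k)) + inner g (z - x (Suc k)) - Lp / 2 * (norm (x (Suc k) - xb k))\<^sup>2)
        \<and> (\<forall>v. inner g v + \<beta> * inner (e (Suc k)) (A *v v) + (1/\<gamma>) * inner (x (Suc k) - xb k) v + inner (N k) (A *v v) = 0)"
  proof -
    from x_update show ?thesis
    proof
      assume c1: "\<forall>k\<ge>1. \<forall>y. aalm_obj f A b \<beta> \<gamma> \<delta> (aalm_bar t x k)
              (aalm_c t \<eta> k *\<^sub>R aalm_bar t lam k - aalm_alpha t \<eta> k *\<^sub>R lam k)
              (aalm_c t \<eta> k) (aalm_alpha t \<eta> k *\<^sub>R (A *v x k) + b) (x (Suc k))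
            \<le> aalm_obj f A b \<beta> \<gamma> \<delta> (aalm_bar t x k)
              (aalm_c t \<eta> k *\<^sub>R aalm_bar t lam k - aalm_alpha t \<eta> k *\<^sub>R lam k)
              (aalm_c t \<eta> k) (aalm_alpha t \<eta> k *\<^sub>R (A *v x k) + b) y"
      show ?thesis
      proof (rule that[of 0])
        fix k :: nat assume k1: "k \<ge> 1"
        have "inner (df (x (Suc k))) v + \<beta> * inner (e (Suc k)) (A *v v) + (1/\<gamma>) * inner (x (Suc k) - xb k) v + inner (N k) (A *v v) = 0" for v
          by (rule FOC_gen[OF k1 f_grad]) (use c1 k1 in \<open>simp add: xb_def lb_def\<close>)
        moreover have "f z \<ge> f (x (Suc k)) + inner (df (x (Suc k))) (z - x (Suc k))" for z
          by (rule grad_ineq[OF f_convex f_grad])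
        ultimately show "\<exists>g. (\<forall>z. f z \<ge> f (x (Suc k)) + inner g (z - x (Suc k)) - 0 / 2 * (norm (x (Suc k) - xb k))\<^sup>2)
          \<and> (\<forall>v. inner g v + \<beta> * inner (e (Suc k)) (A *v v) + (1/\<gamma>) * inner (x (Suc k) - xb k) v + inner (N k) (A *v v) = 0)"
          by auto
      qed (use gamma in auto)
    next
      assume c2: "(\<exists>L>0. (\<forall>u v. norm (df u - df v) \<le> L * norm (u - v)) \<and> \<gamma> \<le> 1 / L)
          \<and> (\<forall>k\<ge>1. \<forall>y.
              aalm_obj (\<lambda>z. inner (df (aalm_bar t x k)) z) A b \<beta> \<gamma> \<delta> (aalm_bar t x k)
                (aalm_c t \<eta> k *\<^sub>R aalm_bar t lam k - aalm_alpha t \<eta> k *\<^sub>R lam k)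
                (aalm_c t \<eta> k) (aalm_alpha t \<eta> k *\<^sub>R (A *v x k) + b) (x (Suc k))
              \<le> aalm_obj (\<lambda>z. inner (df (aalm_bar t x k)) z) A b \<beta> \<gamma> \<delta> (aalm_bar t x k)
                (aalm_c t \<eta> k *\<^sub>R aalm_bar t lam k - aalm_alpha t \<eta> k *\<^sub>R lam k)
                (aalm_c t \<eta> k) (aalm_alpha t \<eta> k *\<^sub>R (A *v x k) + b) y)"
      then obtain L where L0: "L > 0" and lip: "\<forall>u v. norm (df u - df v) \<le> L * norm (u - v)"
        and gL: "\<gamma> \<le> 1 / L" by blast
      show ?thesis
      proof (rule that[of L])
        show "L * \<gamma> \<le> 1" using gL L0 by (simp add: field_simps)
        fix k :: nat assume k1: "k \<ge> 1"
        have hd: "((\<lambda>z. inner (df (xb k)) z) has_derivative (\<lambda>v. inner (df (xb k)) v)) (at (x (Suc k)))"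
          by (rule bounded_linear_imp_has_derivative) (rule bounded_linear_inner_right)
        have "inner (df (xb k)) v + \<beta> * inner (e (Suc k)) (A *v v) + (1/\<gamma>) * inner (x (Suc k) - xb k) v + inner (N k) (A *v v) = 0" for v
          by (rule FOC_gen[OF k1 hd]) (use c2 k1 in \<open>simp add: xb_def lb_def\<close>)
        moreover have "f z \<ge> f (x (Suc k)) + inner (df (xb k)) (z - x (Suc k)) - L / 2 * (norm (x (Suc k) - xb k))\<^sup>2" for z
        proof -
          have "f z \<ge> f (xb k) + inner (df (xb k)) (z - xb k)"
            by (rule grad_ineq[OF f_convex f_grad])
          moreover have "f (x (Suc k)) \<le> f (xb k) + inner (df (xb k)) (x (Suc k) - xb k) + L / 2 * (norm (x (Suc k) - xb k))\<^sup>2"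
            by (rule descent[OF f_grad lip])
          moreover have "inner (df (xb k)) (z - xb k) - inner (df (xb k)) (x (Suc k) - xb k) = inner (df (xb k)) (z - x (Suc k))"
            by (simp add: inner_diff_right)
          ultimately show ?thesis by linarith
        qed
        ultimately show "\<exists>g. (\<forall>z. f z \<ge> f (x (Suc k)) + inner g (z - x (Suc k)) - L / 2 * (norm (x (Suc k) - xb k))\<^sup>2)
          \<and> (\<forall>v. inner g v + \<beta> * inner (e (Suc k)) (A *v v) + (1/\<gamma>) * inner (x (Suc k) - xb k) v + inner (N k) (A *v v) = 0)"
          by auto
      qed (use L0 in auto)
    qed
  qed
  define \<Phi> where "\<Phi> z = F z - f xh + inner lh (A *v z - b)" for z
  have AtA: "inner (transpose A *v u) v = inner u (A *v v)" for u v
    by (simp add: dot_lmul_matrix)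
  have Phi_nn: "\<Phi> z \<ge> 0" for z
  proof -
    have "f z \<ge> f xh + inner (df xh) (z - xh)" by (rule grad_ineq[OF f_convex f_grad])
    moreover have "df xh = - (transpose A *v lh)" using lh by (simp add: eq_neg_iff_add_eq_0)
    moreover have "inner (transpose A *v lh) (z - xh) = inner lh (A *v z - b)"
      unfolding AtA using xh by (simp add: matrix_vector_mult_diff_distrib)
    moreover have "\<beta> / 2 * (norm (A *v z - b))\<^sup>2 \<ge> 0" using beta by simp
    ultimately show ?thesis unfolding \<Phi>_def F_def by simp
  qed
  have Phi_xh: "\<Phi> xh = 0" unfolding \<Phi>_def F_def using xh by simp
  have KPhi: "\<Phi> z \<ge> \<Phi> (x (Suc k)) - inner (N k - lh) (A *v (z - x (Suc k)))
      - (1/\<gamma>) * inner (x (Suc k) - xb k) (z - x (Suc k)) - Lp / 2 * (norm (x (Suc k) - xb k))\<^sup>2"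
    if k1: "k \<ge> 1" for k z
  proof -
    define y where "y = x (Suc k)"
    obtain g where g1: "\<forall>z. f z \<ge> f y + inner g (z - y) - Lp / 2 * (norm (y - xb k))\<^sup>2"
      and g2: "\<forall>v. inner g v + \<beta> * inner (e (Suc k)) (A *v v) + (1/\<gamma>) * inner (y - xb k) v + inner (N k) (A *v v) = 0"
      using FOC[OF k1] unfolding y_def by blast
    have q: "\<beta> / 2 * (norm (A *v z - b))\<^sup>2 \<ge> \<beta> / 2 * (norm (A *v y - b))\<^sup>2 + \<beta> * inner (A *v y - b) (A *v (z - y))"
    proof -
      have id: "(norm (A *v z - b))\<^sup>2 - (norm (A *v y - b))\<^sup>2 - 2 * inner (A *v y - b) (A *v (z - y)) = (norm (A *v (z - y)))\<^sup>2"
        by (simp add: power2_norm_eq_inner inner_simps inner_commute matrix_vector_mult_diff_distrib algebra_simps)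
      have "\<beta> / 2 * ((norm (A *v z - b))\<^sup>2 - (norm (A *v y - b))\<^sup>2 - 2 * inner (A *v y - b) (A *v (z - y))) \<ge> 0"
        unfolding id using beta by simp
      then show ?thesis by (simp add: algebra_simps)
    qed
    have "inner lh (A *v z - b) - inner lh (A *v y - b) = inner lh (A *v (z - y))"
      by (simp add: inner_diff_right matrix_vector_mult_diff_distrib)
    moreover have "inner (N k - lh) (A *v (z - y)) = inner (N k) (A *v (z - y)) - inner lh (A *v (z - y))"
      by (simp add: inner_diff_left)
    moreover note g1[rule_format, of z] g2[rule_format, of "z - y"] q
    ultimately show ?thesis unfolding \<Phi>_def F_def y_def[symmetric] e_def by (simp add: algebra_simps)
  qed
  define E where "E j = (c j)\<^sup>2 * \<Phi> (x (Suc j)) + (1/\<gamma>) * (1/2 * (norm (W j - xh))\<^sup>2 + eps/2 * (norm (x j - xh))\<^sup>2)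
     + (1/\<delta>) * (1/2 * (norm (N j - lh))\<^sup>2 + eps/2 * (norm (lam j - lh))\<^sup>2)" for j
  have Estep: "E (Suc j) \<le> E j" for j
  proof -
    define k where "k = Suc j"
    have k1: "k \<ge> 1" and km: "k - 1 = j" unfolding k_def by auto
    define cc where "cc = c k"
    define y where "y = x (Suc k)"
    define q where "q = y - xb k"
    have cc1: "cc \<ge> 1" unfolding cc_def by (rule c_ge1)
    have K1: "\<Phi> (x k) \<ge> \<Phi> y - inner (N k - lh) (A *v (x k - y)) - (1/\<gamma>) * inner q (x k - y) - Lp / 2 * (norm q)\<^sup>2"
      using KPhi[OF k1, of "x k"] unfolding y_def q_def .
    have K2: "\<Phi> xh \<ge> \<Phi> y - inner (N k - lh) (A *v (xh - y)) - (1/\<gamma>) * inner q (xh - y) - Lp / 2 * (norm q)\<^sup>2"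
      using KPhi[OF k1, of xh] unfolding y_def q_def .
    have ccc: "cc\<^sup>2 - cc \<ge> 0" using cc1 by (simp add: power2_eq_square)
    have "(cc\<^sup>2 - cc) * \<Phi> (x k) + cc * \<Phi> xh \<ge>
      (cc\<^sup>2 - cc) * (\<Phi> y - inner (N k - lh) (A *v (x k - y)) - (1/\<gamma>) * inner q (x k - y) - Lp / 2 * (norm q)\<^sup>2)
      + cc * (\<Phi> y - inner (N k - lh) (A *v (xh - y)) - (1/\<gamma>) * inner q (xh - y) - Lp / 2 * (norm q)\<^sup>2)"
      using K1 K2 ccc cc1 by (intro add_mono mult_left_mono) auto
    moreover have V: "(cc\<^sup>2 - cc) *\<^sub>R (x k - y) + cc *\<^sub>R (xh - y) = cc *\<^sub>R (xh - W k)"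
    proof -
      have "(cc\<^sup>2 - cc) *\<^sub>R (x k - y) + cc *\<^sub>R (xh - y) = cc *\<^sub>R ((cc - 1) *\<^sub>R (x k - y) + (xh - y))"
        by (simp add: power2_eq_square algebra_simps)
      also have "(cc - 1) *\<^sub>R (x k - y) + (xh - y) = - (W k - xh)"
        unfolding W_def cc_def y_def by (simp add: algebra_simps)
      finally show ?thesis by (simp add: algebra_simps)
    qed
    have I1: "(cc\<^sup>2 - cc) * inner u (A *v (x k - y)) + cc * inner u (A *v (xh - y)) = - cc * inner u (A *v W k - b)" for u
    proof -
      have "(cc\<^sup>2 - cc) * inner u (A *v (x k - y)) + cc * inner u (A *v (xh - y))
          = inner u (A *v ((cc\<^sup>2 - cc) *\<^sub>R (x k - y) + cc *\<^sub>R (xh - y)))"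
        by (simp add: matrix_vector_right_distrib matrix_vector_mult_scaleR inner_add_right)
      also have "\<dots> = - cc * inner u (A *v W k - b)"
        unfolding V using xh by (simp add: matrix_vector_mult_scaleR matrix_vector_mult_diff_distrib inner_diff_right algebra_simps)
      finally show ?thesis .
    qed
    have I2: "(cc\<^sup>2 - cc) * inner q (x k - y) + cc * inner q (xh - y) = - inner (cc *\<^sub>R q) (W k - xh)"
    proof -
      have "(cc\<^sup>2 - cc) * inner q (x k - y) + cc * inner q (xh - y) = inner q ((cc\<^sup>2 - cc) *\<^sub>R (x k - y) + cc *\<^sub>R (xh - y))"
        by (simp add: inner_add_right)
      also have "\<dots> = - inner (cc *\<^sub>R q) (W k - xh)" unfolding V by (simp add: inner_diff_right algebra_simps)
      finally show ?thesis .
    qed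
    have I3: "cc\<^sup>2 * (norm q)\<^sup>2 = (norm (cc *\<^sub>R q))\<^sup>2" using cc1 by (simp add: power_mult_distrib)
    have comb0: "(C - cc) * (P - a1 - g * b1 - l * nq) + cc * (P - a2 - g * b2 - l * nq)
       = C * P - ((C - cc) * a1 + cc * a2) - g * ((C - cc) * b1 + cc * b2) - l * (C * nq)"
      for a1 a2 b1 b2 nq g l P C :: real by (simp add: algebra_simps)
    note comb = comb0[of "cc\<^sup>2" "\<Phi> y" _ "1/\<gamma>" _ "Lp / 2"]
    ultimately have main: "(cc\<^sup>2 - cc) * \<Phi> (x k) \<ge> cc\<^sup>2 * \<Phi> y + cc * inner (N k - lh) (A *v W k - b)
        + (1/\<gamma>) * inner (cc *\<^sub>R q) (W k - xh) - Lp / 2 * (norm (cc *\<^sub>R q))\<^sup>2"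
      unfolding Phi_xh comb I1 I2 I3 by simp
    have Dx: "cc *\<^sub>R q = (W k - xh) - (W j - xh) + eps *\<^sub>R (x k - x j)"
      using Pid_x[OF k1] unfolding cc_def q_def y_def km by simp
    have Dl: "cc *\<^sub>R (A *v W k - b) = (1/\<delta>) *\<^sub>R ((N k - lh) - (N j - lh) + eps *\<^sub>R (lam k - lam j))"
    proof -
      have "(N k - lh) - (N j - lh) + eps *\<^sub>R (lam k - lam j) = cc *\<^sub>R (lam (Suc k) - lb k)"
        using Pid_l[OF k1] unfolding cc_def km by simp
      also have "\<dots> = \<delta> *\<^sub>R (cc *\<^sub>R (A *v W k - b))" unfolding Did[OF k1] by simp
      finally show ?thesis using delta by simp
    qed
    have cj: "c j - 1/2 - eps/2 \<ge> 0"
    proof -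
      have "t (Suc j) \<ge> 1" using tge1 by simp
      then have "c j \<ge> 1/\<eta>" unfolding c_def using eta0 by (intro divide_right_mono) auto
      moreover have "1/\<eta> - 1/2 - eps/2 = 1/(2*\<eta>)" unfolding eps_def using eta0 by (simp add: field_simps)
      moreover have "1/(2*\<eta>) > 0" using eta0 by simp
      ultimately show ?thesis by linarith
    qed
    have kg: "0 \<le> Lp * \<gamma>" using Lp0 gamma by simp
    have TX: "inner (cc *\<^sub>R q) (W k - xh) - (Lp * \<gamma>) / 2 * (norm (cc *\<^sub>R q))\<^sup>2
       \<ge> 1/2 * (norm (W k - xh))\<^sup>2 - 1/2 * (norm (W j - xh))\<^sup>2 + eps/2 * (norm (x k - xh))\<^sup>2 - eps/2 * (norm (x j - xh))\<^sup>2"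
      unfolding Dx
      by (rule tele[OF kg Lpg eps0 cj]) (auto simp: W_def k_def algebra_simps)
    have TL: "inner ((N k - lh) - (N j - lh) + eps *\<^sub>R (lam k - lam j)) (N k - lh) - 0 / 2 * (norm ((N k - lh) - (N j - lh) + eps *\<^sub>R (lam k - lam j)))\<^sup>2
       \<ge> 1/2 * (norm (N k - lh))\<^sup>2 - 1/2 * (norm (N j - lh))\<^sup>2 + eps/2 * (norm (lam k - lh))\<^sup>2 - eps/2 * (norm (lam j - lh))\<^sup>2"
      by (rule tele[OF _ _ eps0 cj]) (auto simp: N_def k_def algebra_simps)
    have TX': "(1/\<gamma>) * inner (cc *\<^sub>R q) (W k - xh) - Lp / 2 * (norm (cc *\<^sub>R q))\<^sup>2
       \<ge> (1/\<gamma>) * (1/2 * (norm (W k - xh))\<^sup>2 - 1/2 * (norm (W j - xh))\<^sup>2 + eps/2 * (norm (x k - xh))\<^sup>2 - eps/2 * (norm (x j - xh))\<^sup>2)"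
    proof -
      have "(1/\<gamma>) * (inner (cc *\<^sub>R q) (W k - xh) - (Lp * \<gamma>) / 2 * (norm (cc *\<^sub>R q))\<^sup>2)
         \<ge> (1/\<gamma>) * (1/2 * (norm (W k - xh))\<^sup>2 - 1/2 * (norm (W j - xh))\<^sup>2 + eps/2 * (norm (x k - xh))\<^sup>2 - eps/2 * (norm (x j - xh))\<^sup>2)"
        using TX gamma by (intro mult_left_mono) auto
      moreover have "(1/\<gamma>) * (inner (cc *\<^sub>R q) (W k - xh) - (Lp * \<gamma>) / 2 * (norm (cc *\<^sub>R q))\<^sup>2)
          = (1/\<gamma>) * inner (cc *\<^sub>R q) (W k - xh) - Lp / 2 * (norm (cc *\<^sub>R q))\<^sup>2"
        using gamma by (simp add: field_simps)
      ultimately show ?thesis by linarith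
    qed
    have TL': "cc * inner (N k - lh) (A *v W k - b)
       \<ge> (1/\<delta>) * (1/2 * (norm (N k - lh))\<^sup>2 - 1/2 * (norm (N j - lh))\<^sup>2 + eps/2 * (norm (lam k - lh))\<^sup>2 - eps/2 * (norm (lam j - lh))\<^sup>2)"
    proof -
      have "cc * inner (N k - lh) (A *v W k - b) = inner (N k - lh) (cc *\<^sub>R (A *v W k - b))" by simp
      also have "\<dots> = (1/\<delta>) * inner ((N k - lh) - (N j - lh) + eps *\<^sub>R (lam k - lam j)) (N k - lh)"
        unfolding Dl by (simp add: inner_commute)
      finally show ?thesis using TL delta by (simp add: divide_right_mono)
    qed
    have PhiC: "(cc\<^sup>2 - cc) * \<Phi> (x k) \<le> (c j)\<^sup>2 * \<Phi> (x k)"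
      using c_rec[of j] Phi_nn[of "x k"] unfolding cc_def k_def by (intro mult_right_mono) auto
    show ?thesis
      using main TX' TL' PhiC unfolding E_def k_def[symmetric] cc_def[symmetric] y_def[symmetric]
      by (simp add: algebra_simps)
  qed
  define C0 where "C0 = E 0"
  have E_le: "E j \<le> C0" for j
    unfolding C0_def by (induction j) (auto intro: order_trans[OF Estep])
  have nn1: "0 \<le> (1/\<gamma>) * (1/2 * (norm (W j - xh))\<^sup>2 + eps/2 * (norm (x j - xh))\<^sup>2)" for j
    using gamma eps0 by simp
  have nn2: "0 \<le> (1/\<delta>) * (1/2 * (norm (N j - lh))\<^sup>2 + eps/2 * (norm (lam j - lh))\<^sup>2)" for j
    using delta eps0 by simp
  have nn3: "0 \<le> (c j)\<^sup>2 * \<Phi> (x (Suc j))" for j using Phi_nn by simp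
  have B1: "(c j)\<^sup>2 * \<Phi> (x (Suc j)) \<le> C0" for j using E_le[of j] nn1[of j] nn2[of j] unfolding E_def by linarith
  define RW where "RW = sqrt (2 * \<gamma> * C0)"
  define RN where "RN = sqrt (2 * \<delta> * C0)"
  have B2: "norm (W j - xh) \<le> RW" for j
  proof -
    have "(1/\<gamma>) * (1/2 * (norm (W j - xh))\<^sup>2) \<le> C0"
      using E_le[of j] nn2[of j] nn3[of j] eps0 gamma unfolding E_def
      by (smt (verit, ccfv_SIG) distrib_left mult_nonneg_nonneg zero_le_power2 divide_nonneg_nonneg)
    then have "(norm (W j - xh))\<^sup>2 \<le> 2 * \<gamma> * C0" using gamma by (simp add: field_simps)
    then show ?thesis unfolding RW_def by (simp add: real_le_rsqrt)
  qed
  have B3: "norm (N j - lh) \<le> RN" for j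
  proof -
    have "(1/\<delta>) * (1/2 * (norm (N j - lh))\<^sup>2) \<le> C0"
      using E_le[of j] nn1[of j] nn3[of j] eps0 delta unfolding E_def
      by (smt (verit, ccfv_SIG) distrib_left mult_nonneg_nonneg zero_le_power2 divide_nonneg_nonneg)
    then have "(norm (N j - lh))\<^sup>2 \<le> 2 * \<delta> * C0" using delta by (simp add: field_simps)
    then show ?thesis unfolding RN_def by (simp add: real_le_rsqrt)
  qed
  define Rx where "Rx = max (norm (x 0 - xh)) RW"
  define Rl where "Rl = max (norm (lam 0 - lh)) RN"
  have xrec: "x (Suc k) = x k + (1 / c k) *\<^sub>R (W k - x k)" for k
    unfolding W_def using c_pos[of k] by simp
  have lrec: "lam (Suc k) = lam k + (1 / c k) *\<^sub>R (N k - lam k)" for k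
    unfolding N_def using c_pos[of k] by simp
  have Bx: "norm (x k - xh) \<le> Rx" for k
    unfolding Rx_def
  proof (rule avg_bound[of "\<lambda>k. 1 / c k"])
    show "0 \<le> 1 / c k \<and> 1 / c k \<le> 1" for k using c_ge1[of k] by simp
    show "x (Suc k) - xh = (1 - 1 / c k) *\<^sub>R (x k - xh) + (1 / c k) *\<^sub>R (W k - xh)" for k
      unfolding xrec[of k] by (simp add: algebra_simps)
    show "norm (W k - xh) \<le> RW" for k by (rule B2)
  qed
  have Bl: "norm (lam k - lh) \<le> Rl" for k
    unfolding Rl_def
  proof (rule avg_bound[of "\<lambda>k. 1 / c k"])
    show "0 \<le> 1 / c k \<and> 1 / c k \<le> 1" for k using c_ge1[of k] by simp
    show "lam (Suc k) - lh = (1 - 1 / c k) *\<^sub>R (lam k - lh) + (1 / c k) *\<^sub>R (N k - lh)" for k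
      unfolding lrec[of k] by (simp add: algebra_simps)
    show "norm (N k - lh) \<le> RN" for k by (rule B3)
  qed
  define G where "G j = (1/\<delta>) *\<^sub>R (N j + eps *\<^sub>R lam j)" for j
  define RG where "RG = (1/\<delta>) * ((norm lh + RN) + eps * (norm lh + Rl))"
  have BG: "norm (G j) \<le> RG" for j
  proof -
    have "norm (N j) \<le> norm lh + RN" using B3[of j] norm_triangle_sub[of "N j" lh] by linarith
    moreover have "norm (lam j) \<le> norm lh + Rl" using Bl[of j] norm_triangle_sub[of "lam j" lh] by linarith
    ultimately have "norm (N j + eps *\<^sub>R lam j) \<le> (norm lh + RN) + eps * (norm lh + Rl)"
      using eps0 by (smt (verit) mult_left_mono norm_scaleR norm_triangle_ineq abs_of_nonneg)
    then show ?thesis unfolding G_def RG_def using delta by (simp add: divide_right_mono)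
  qed
  define Y where "Y j = (c j)\<^sup>2 *\<^sub>R e (Suc j) - G j" for j
  have Yrec: "Y (Suc j) = (1 - (1 - ((c (Suc j))\<^sup>2 - c (Suc j)) / (c j)\<^sup>2)) *\<^sub>R Y j
      + (1 - ((c (Suc j))\<^sup>2 - c (Suc j)) / (c j)\<^sup>2) *\<^sub>R (- G j)" for j
  proof -
    define k where "k = Suc j"
    have k1: "k \<ge> 1" and km: "k - 1 = j" unfolding k_def by auto
    have H1: "c k *\<^sub>R (A *v W k - b) = G k - G j"
    proof -
      have "\<delta> *\<^sub>R (c k *\<^sub>R (A *v W k - b)) = (N k - N j) + eps *\<^sub>R (lam k - lam j)"
        using Pid_l[OF k1] unfolding Did[OF k1] km by (simp add: mult.commute)
      then have "c k *\<^sub>R (A *v W k - b) = (1/\<delta>) *\<^sub>R ((N k - N j) + eps *\<^sub>R (lam k - lam j))"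
        using delta by (metis (no_types, lifting) divide_self_if less_irrefl scaleR_one scaleR_scaleR times_divide_eq_left mult.commute)
      then show ?thesis unfolding G_def by (simp add: algebra_simps)
    qed
    have H2: "c k *\<^sub>R (A *v W k - b) = (c k)\<^sup>2 *\<^sub>R e (Suc k) - ((c k)\<^sup>2 - c k) *\<^sub>R e k"
      unfolding W_def e_def by (simp add: algebra_simps power2_eq_square)
    have "(c k)\<^sup>2 *\<^sub>R e (Suc k) = c k *\<^sub>R (A *v W k - b) + ((c k)\<^sup>2 - c k) *\<^sub>R e k"
      unfolding H2 by simp
    then have "(c k)\<^sup>2 *\<^sub>R e (Suc k) = ((c k)\<^sup>2 - c k) *\<^sub>R e k + G k - G j" unfolding H1 by simp
    then have "Y (Suc j) = ((c k)\<^sup>2 - c k) *\<^sub>R e k - G j" unfolding Y_def k_def by simp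
    also have "\<dots> = (((c k)\<^sup>2 - c k) / (c j)\<^sup>2) *\<^sub>R ((c j)\<^sup>2 *\<^sub>R e k) - G j"
      using c_pos[of j] by simp
    also have "\<dots> = (((c k)\<^sup>2 - c k) / (c j)\<^sup>2) *\<^sub>R (Y j + G j) - G j"
      unfolding Y_def k_def by simp
    finally show ?thesis unfolding k_def by (simp add: algebra_simps)
  qed
  define Re where "Re = max (norm (Y 0)) RG + RG"
  have Be: "norm (e (Suc j)) \<le> Re / (c j)\<^sup>2" for j
  proof -
    have "norm (Y j) \<le> max (norm (Y 0)) RG"
    proof (rule avg_bound[of "\<lambda>j. 1 - ((c (Suc j))\<^sup>2 - c (Suc j)) / (c j)\<^sup>2"])
      show "0 \<le> 1 - ((c (Suc j))\<^sup>2 - c (Suc j)) / (c j)\<^sup>2 \<and> 1 - ((c (Suc j))\<^sup>2 - c (Suc j)) / (c j)\<^sup>2 \<le> 1" for j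
      proof -
        have "(c (Suc j))\<^sup>2 - c (Suc j) \<ge> 0" using c_ge1[of "Suc j"] by (simp add: power2_eq_square)
        moreover have "((c (Suc j))\<^sup>2 - c (Suc j)) / (c j)\<^sup>2 \<le> 1" using c_rec[of j] c_pos[of j] by simp
        ultimately show ?thesis by simp
      qed
      show "Y (Suc j) = (1 - (1 - ((c (Suc j))\<^sup>2 - c (Suc j)) / (c j)\<^sup>2)) *\<^sub>R Y j
      + (1 - ((c (Suc j))\<^sup>2 - c (Suc j)) / (c j)\<^sup>2) *\<^sub>R (- G j)" for j by (rule Yrec)
      show "norm (- G j) \<le> RG" for j using BG by simp
    qed
    then have "norm ((c j)\<^sup>2 *\<^sub>R e (Suc j)) \<le> Re"
      unfolding Re_def using BG[of j] norm_triangle_ineq[of "Y j" "G j"] unfolding Y_def by simp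
    then show ?thesis using c_pos[of j] by (simp add: field_simps)
  qed
  define Q where "Q = 2 * RW + eps * (2 * Rx)"
  have Bq: "norm (x (Suc k) - xb k) \<le> Q / c k" if k1: "k \<ge> 1" for k
  proof -
    have "norm (c k *\<^sub>R (x (Suc k) - xb k)) \<le> Q"
    proof -
      have "norm (W k - W (k - 1)) \<le> 2 * RW"
        using B2[of k] B2[of "k - 1"] norm_triangle_ineq4[of "W k - xh" "W (k - 1) - xh"] by simp
      moreover have "norm (x k - x (k - 1)) \<le> 2 * Rx"
        using Bx[of k] Bx[of "k - 1"] norm_triangle_ineq4[of "x k - xh" "x (k - 1) - xh"] by simp
      ultimately show ?thesis unfolding Pid_x[OF k1] Q_def using eps0
        by (smt (verit) mult_left_mono norm_scaleR norm_triangle_ineq abs_of_nonneg)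
    qed
    then have "c k * norm (x (Suc k) - xb k) \<le> Q" using c_pos[of k] by (metis abs_of_pos norm_scaleR)
    then show ?thesis using c_pos[of k] by (simp add: field_simps)
  qed
  have C00: "C0 \<ge> 0" using E_le[of 0] nn1[of 0] nn2[of 0] nn3[of 0] unfolding C0_def E_def by simp
  have RN0: "RN \<ge> 0" unfolding RN_def using delta C00 by simp
  have RW0: "RW \<ge> 0" unfolding RW_def using gamma C00 by simp
  have Rx0: "Rx \<ge> 0" unfolding Rx_def by (simp add: le_max_iff_disj)
  have Rl0: "Rl \<ge> 0" unfolding Rl_def by (simp add: le_max_iff_disj)
  have RG0: "RG \<ge> 0" unfolding RG_def using delta eps0 RN0 Rl0 by simp
  have Re0: "Re \<ge> 0" unfolding Re_def using RG0 by (simp add: le_max_iff_disj)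
  have Q0: "Q \<ge> 0" unfolding Q_def using RW0 Rx0 eps0 by simp
  have ic: "(\<lambda>k. inverse (c k)) \<longlonglongrightarrow> 0" by (rule tendsto_inverse_0_at_top[OF c_inf])
  have ic2: "(\<lambda>k. M * (inverse (c k))\<^sup>2) \<longlonglongrightarrow> 0" for M
    using tendsto_mult[OF tendsto_const[of M] tendsto_power[OF ic, of 2]] by simp
  have L_e: "(\<lambda>m. e (Suc m)) \<longlonglongrightarrow> 0"
  proof (rule Lim_null_comparison[OF _ ic2[of Re]])
    show "\<forall>\<^sub>F m in sequentially. norm (e (Suc m)) \<le> Re * (inverse (c m))\<^sup>2"
      using Be by (simp add: power_inverse divide_inverse)
  qed
  have L_phi: "(\<lambda>m. \<Phi> (x (Suc m))) \<longlonglongrightarrow> 0"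
  proof (rule Lim_null_comparison[OF _ ic2[of C0]])
    show "\<forall>\<^sub>F m in sequentially. norm (\<Phi> (x (Suc m))) \<le> C0 * (inverse (c m))\<^sup>2"
    proof (rule always_eventually, rule allI)
      fix m
      have "\<Phi> (x (Suc m)) \<le> C0 / (c m)\<^sup>2" using B1[of m] c_pos[of m] by (simp add: field_simps)
      then show "norm (\<Phi> (x (Suc m))) \<le> C0 * (inverse (c m))\<^sup>2"
        using Phi_nn[of "x (Suc m)"] by (simp add: power_inverse divide_inverse)
    qed
  qed
  have L_f: "(\<lambda>m. f (x (Suc m))) \<longlonglongrightarrow> f xh"
  proof -
    have "(\<lambda>m. \<Phi> (x (Suc m)) + f xh - inner lh (e (Suc m)) - \<beta> / 2 * (norm (e (Suc m)))\<^sup>2)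
       \<longlonglongrightarrow> 0 + f xh - inner lh 0 - \<beta> / 2 * (norm (0::real^'m))\<^sup>2"
      by (intro tendsto_intros L_phi L_e)
    moreover have "\<Phi> (x (Suc m)) + f xh - inner lh (e (Suc m)) - \<beta> / 2 * (norm (e (Suc m)))\<^sup>2 = f (x (Suc m))" for m
      unfolding \<Phi>_def F_def e_def by simp
    ultimately show ?thesis by simp
  qed
  define r' where "r' j = r (Suc j) - 1" for j
  have rge: "r (Suc j) \<ge> 1" for j using seq_suble[OF r, of "Suc j"] by simp
  have r'S: "Suc (r' j) = r (Suc j)" for j unfolding r'_def using rge[of j] by simp
  have r'mono: "strict_mono r'"
    unfolding strict_mono_Suc_iff r'_def using r rge
    by (metis Suc_less_eq r'S r'_def strict_mono_Suc_iff)
  have r'ge: "r' j \<ge> j" for j by (rule seq_suble[OF r'mono])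
  have xconv: "(\<lambda>j. x (Suc (r' j))) \<longlonglongrightarrow> xs"
  proof -
    have "(\<lambda>k. x (r k)) \<longlonglongrightarrow> xs" using tendsto_fst[OF rconv] by simp
    then have "(\<lambda>j. x (r (Suc j))) \<longlonglongrightarrow> xs" by (rule LIMSEQ_Suc)
    then show ?thesis unfolding r'S .
  qed
  have lconv: "(\<lambda>j. lam (Suc (r' j))) \<longlonglongrightarrow> ls"
  proof -
    have "(\<lambda>k. lam (r k)) \<longlonglongrightarrow> ls" using tendsto_snd[OF rconv] by simp
    then have "(\<lambda>j. lam (r (Suc j))) \<longlonglongrightarrow> ls" by (rule LIMSEQ_Suc)
    then show ?thesis unfolding r'S .
  qed
  have feas: "A *v xs = b"
  proof -
    have "(\<lambda>j. e (Suc (r' j))) \<longlonglongrightarrow> 0"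
      using LIMSEQ_subseq_LIMSEQ[OF L_e r'mono] by (simp add: o_def)
    moreover have "(\<lambda>j. e (Suc (r' j))) \<longlonglongrightarrow> A *v xs - b"
      unfolding e_def
      by (intro tendsto_diff tendsto_const bounded_linear.tendsto[OF matrix_vector_mul_bounded_linear] xconv)
    ultimately have "A *v xs - b = 0" using LIMSEQ_unique by blast
    then show ?thesis by simp
  qed
  have fxs: "f xs = f xh"
  proof -
    have "(\<lambda>j. f (x (Suc (r' j)))) \<longlonglongrightarrow> f xh"
      using LIMSEQ_subseq_LIMSEQ[OF L_f r'mono] by (simp add: o_def)
    moreover have "isCont f xs" using has_derivative_continuous[OF f_grad[of xs]] by simp
    then have "(\<lambda>j. f (x (Suc (r' j)))) \<longlonglongrightarrow> f xs"
      using isCont_tendsto_compose xconv by blast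
    ultimately show ?thesis using LIMSEQ_unique by blast
  qed
  have dual: "F z + inner ls (A *v z - b) - f xh \<ge> 0" for z
  proof -
    define g where "g u = F z + inner u (A *v z - b) - f xh" for u
    define Mz where "Mz = RN * Re + (1/\<gamma>) * (Q * (norm (z - xh) + Rx)) + Lp / 2 * Q\<^sup>2"
    have Mz0: "Mz \<ge> 0" unfolding Mz_def using RN0 Re0 Q0 Rx0 gamma Lp0 by simp
    have gN: "g (N k) \<ge> - (Mz / c k)" if k1: "k \<ge> 1" for k
    proof -
      define y where "y = x (Suc k)"
      define q where "q = y - xb k"
      have K: "\<Phi> z \<ge> \<Phi> y - inner (N k - lh) (A *v (z - y)) - (1/\<gamma>) * inner q (z - y) - Lp / 2 * (norm q)\<^sup>2"
        using KPhi[OF k1, of z] unfolding y_def q_def .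
      have gid: "g (N k) = \<Phi> z + inner (N k - lh) (A *v z - b)"
        unfolding g_def \<Phi>_def by (simp add: inner_diff_left)
      have Aid: "inner (N k - lh) (A *v (z - y)) = inner (N k - lh) (A *v z - b) - inner (N k - lh) (e (Suc k))"
        unfolding e_def y_def by (simp add: matrix_vector_mult_diff_distrib inner_diff_right)
      have ck: "c k \<ge> 1" by (rule c_ge1)
      have i1: "inner (N k - lh) (e (Suc k)) \<ge> - (RN * Re / c k)"
      proof -
        have "\<bar>inner (N k - lh) (e (Suc k))\<bar> \<le> norm (N k - lh) * norm (e (Suc k))" by (rule Cauchy_Schwarz_ineq2)
        also have "\<dots> \<le> RN * (Re / (c k)\<^sup>2)" using B3[of k] Be[of k] RN0 by (intro mult_mono) auto
        also have "\<dots> \<le> RN * (Re / c k)"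
          using ck Re0 RN0 by (intro mult_left_mono divide_left_mono) (auto simp: power2_eq_square)
        finally show ?thesis by simp
      qed
      have i2: "inner q (z - y) \<le> Q * (norm (z - xh) + Rx) / c k"
      proof -
        have "inner q (z - y) \<le> norm q * norm (z - y)" by (rule norm_cauchy_schwarz)
        also have "\<dots> \<le> (Q / c k) * (norm (z - xh) + Rx)"
        proof (rule mult_mono)
          show "norm q \<le> Q / c k" unfolding q_def y_def by (rule Bq[OF k1])
          show "norm (z - y) \<le> norm (z - xh) + Rx"
            using Bx[of "Suc k"] norm_triangle_ineq[of "z - xh" "xh - y"] norm_minus_commute[of xh y]
            unfolding y_def by simp
        qed (use Q0 ck in auto)
        finally show ?thesis by simp
      qed
      have i3: "(norm q)\<^sup>2 \<le> Q\<^sup>2 / c k"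
      proof -
        have "norm q \<le> Q / c k" unfolding q_def y_def by (rule Bq[OF k1])
        then have "(norm q)\<^sup>2 \<le> (Q / c k)\<^sup>2" by (intro power_mono) auto
        also have "\<dots> = Q\<^sup>2 / (c k)\<^sup>2" by (simp add: power_divide)
        also have "\<dots> \<le> Q\<^sup>2 / c k"
          by (rule divide_left_mono) (use ck in \<open>auto simp: power2_eq_square\<close>)
        finally show ?thesis .
      qed
      have "(1/\<gamma>) * inner q (z - y) \<le> (1/\<gamma>) * (Q * (norm (z - xh) + Rx) / c k)"
        using i2 gamma by (intro mult_left_mono) auto
      moreover have "Lp / 2 * (norm q)\<^sup>2 \<le> Lp / 2 * (Q\<^sup>2 / c k)" using i3 Lp0 by (intro mult_left_mono) auto
      moreover have "Mz / c k = RN * Re / c k + (1/\<gamma>) * (Q * (norm (z - xh) + Rx) / c k) + Lp / 2 * (Q\<^sup>2 / c k)"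
        unfolding Mz_def by (simp add: add_divide_distrib)
      moreover have "\<Phi> y \<ge> 0" by (rule Phi_nn)
      ultimately show ?thesis using K gid Aid i1 by linarith
    qed
    have gaff: "g (lam (Suc k)) = (1 - 1 / c k) * g (lam k) + (1 / c k) * g (N k)" for k
    proof -
      have L: "lam (Suc k) = (1 - 1 / c k) *\<^sub>R lam k + (1 / c k) *\<^sub>R N k"
        unfolding lrec[of k] by (simp add: algebra_simps)
      show ?thesis unfolding g_def L by (simp add: inner_add_left algebra_simps)
    qed
    have eps_bound: "g ls \<ge> - \<epsilon>" if ep: "\<epsilon> > 0" for \<epsilon>
    proof -
      obtain K0 where K0: "\<And>k. k \<ge> K0 \<Longrightarrow> c k \<ge> Mz / \<epsilon>"
        using c_inf unfolding filterlim_at_top eventually_sequentially by blast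
      define J where "J = K0"
      have gNe: "g (N k) \<ge> - \<epsilon>" if "k \<ge> Suc J" for k
      proof -
        have k1: "k \<ge> 1" using that by simp
        have "c k \<ge> Mz / \<epsilon>" using K0 that unfolding J_def by simp
        then have "Mz / c k \<le> \<epsilon>" using ep c_pos[of k] Mz0 by (simp add: field_simps)
        then show ?thesis using gN[OF k1] by linarith
      qed
      define m where "m = min 0 ((c J)\<^sup>2 * (g (lam (Suc J)) + \<epsilon>))"
      have low: "(c j)\<^sup>2 * (g (lam (Suc j)) + \<epsilon>) \<ge> m" if "j \<ge> J" for j
        unfolding m_def
      proof (rule avg_lower[of J c "\<lambda>j. g (lam (Suc j))" \<epsilon> j])
        show "c (Suc j) \<ge> 1" for j by (rule c_ge1)
        show "(c (Suc j))\<^sup>2 - c (Suc j) \<le> (c j)\<^sup>2" for j by (rule c_rec)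
        show "g (lam (Suc (Suc j))) \<ge> (1 - 1 / c (Suc j)) * g (lam (Suc j)) - \<epsilon> / c (Suc j)" if "j \<ge> J" for j
        proof -
          have "g (N (Suc j)) \<ge> - \<epsilon>" using gNe that by simp
          then have "(1 / c (Suc j)) * g (N (Suc j)) \<ge> (1 / c (Suc j)) * (- \<epsilon>)"
            using c_pos[of "Suc j"] by (intro mult_left_mono) auto
          then show ?thesis unfolding gaff[of "Suc j"] by simp
        qed
      qed (use that in auto)
      have low2: "g (lam (Suc j)) \<ge> - \<epsilon> + m * (inverse (c j))\<^sup>2" if "j \<ge> J" for j
      proof -
        have "m * (inverse (c j))\<^sup>2 \<le> ((c j)\<^sup>2 * (g (lam (Suc j)) + \<epsilon>)) * (inverse (c j))\<^sup>2"
          using low[OF that] by (intro mult_right_mono) auto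
        also have "\<dots> = g (lam (Suc j)) + \<epsilon>" using c_pos[of j] by (simp add: field_simps power2_eq_square)
        finally show ?thesis by simp
      qed
      have T1: "(\<lambda>j. g (lam (Suc (r' j)))) \<longlonglongrightarrow> g ls"
        unfolding g_def by (intro tendsto_intros lconv)
      have icr: "(\<lambda>j. inverse (c (r' j))) \<longlonglongrightarrow> 0"
        using LIMSEQ_subseq_LIMSEQ[OF ic r'mono] by (simp add: o_def)
      have T2: "(\<lambda>j. - \<epsilon> + m * (inverse (c (r' j)))\<^sup>2) \<longlonglongrightarrow> - \<epsilon> + m * 0\<^sup>2"
        by (intro tendsto_intros icr)
      have ev: "\<forall>\<^sub>F j in sequentially. - \<epsilon> + m * (inverse (c (r' j)))\<^sup>2 \<le> g (lam (Suc (r' j)))"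
        unfolding eventually_sequentially
      proof (intro exI[of _ J] allI impI)
        fix j assume "J \<le> j"
        then show "- \<epsilon> + m * (inverse (c (r' j)))\<^sup>2 \<le> g (lam (Suc (r' j)))"
          using low2[of "r' j"] r'ge[of j] by simp
      qed
      have "- \<epsilon> + m * 0\<^sup>2 \<le> g ls"
        by (rule tendsto_le[OF sequentially_bot T1 T2 ev])
      then show ?thesis by simp
    qed
    show ?thesis
    proof (rule ccontr)
      assume "\<not> ?thesis"
      then have "g ls < 0" unfolding g_def by simp
      then have "g ls \<ge> - (- g ls / 2)" using eps_bound[of "- g ls / 2"] by simp
      then show False using \<open>g ls < 0\<close> by simp
    qed
  qed
  have "df xs + transpose A *v ls = 0"
  proof (rule kkt_final[where df=df and xs=xs and ls=ls, OF f_grad[of xs] feas])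
    show "\<forall>z. f xs \<le> f z + \<beta> / 2 * (norm (A *v z - b))\<^sup>2 + inner ls (A *v z - b)"
      using dual fxs unfolding F_def by (simp add: algebra_simps)
  qed
  then show "(xs, ls) \<in> KKT_set A b df" unfolding KKT_set_def using feas by simp
qed

end
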